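(* Let $\mathcal C\subseteq2^{[n]}$ be a code. If the polar complex $\Gamma(\mathcal C)$ is shellable, then either $\mathcal C=2^{[n]}$ or $\Gamma(\mathcal C)$ is collapsible.
   Context: The polar complex $\Gamma(\mathcal C)$ is the simplicial complex on $[n]\sqcup\{\bar1,\dots,\bar n\}$ consisting of all subsets of the sets $\sigma\sqcup\{\bar i:i\in[n]\setminus\sigma\}$, $\sigma\in\mathcal C$; it is pure of dimension $n-1$. A pure $k$-dimensional complex is shellable if its facets admit an ordering $F_1,\dots,F_t$ such that for each $i>1$, the complex of all subsets of $F_i$ intersected with the complex of all subsets of $F_1,\dots,F_{i-1}$ is pure of dimension $k-1$. A free pair in a complex $\Delta$ is $(\sigma,\tau)$ with $\tau$ a facet, $\sigma\subsetneq\tau$, and $\sigma$ contained in no other facet; collapsing along $\sigma$ replaces $\Delta$ by $\{\nu\in\Delta:\nu\not\supseteq\sigma\}$; $\Delta$ is collapsible if a finite sequence of collapses yields the void complex $\{\}$ (with no faces), so $\{\}$ is collapsible and $\{\emptyset\}$ is not. *)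

theory Defs
  imports Main
begin

text \<open>Vertices of the polar complex: Inl i stands for i, Inr i for the barred vertex bar-i.
  A simplicial complex is represented by its set of faces.\<close>

definition polar_facet :: "nat \<Rightarrow> nat set \<Rightarrow> (nat + nat) set" where
  "polar_facet n \<sigma> = Inl ` \<sigma> \<union> Inr ` ({1..n} - \<sigma>)"

definition polar_complex :: "nat \<Rightarrow> nat set set \<Rightarrow> (nat + nat) set set" where
  "polar_complex n C = {\<nu>. \<exists>\<sigma>\<in>C. \<nu> \<subseteq> polar_facet n \<sigma>}"

definition facets :: "'a set set \<Rightarrow> 'a set set" where
  "facets K = {F \<in> K. \<forall>G\<in>K. F \<subseteq> G \<longrightarrow> G = F}"

text \<open>Shellability of a pure complex whose facets have d elements (dimension d-1):
  the intersection of each later facet's simplex with the earlier ones must be pure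
  of dimension d-2, i.e. all its facets have d-1 elements.\<close>

definition shellable :: "'a set set \<Rightarrow> bool" where
  "shellable \<Delta> \<longleftrightarrow> (\<exists>d::nat. (\<forall>F\<in>facets \<Delta>. finite F \<and> card F = d) \<and>
     (\<exists>Fs. distinct Fs \<and> set Fs = facets \<Delta> \<and>
        (\<forall>i. 0 < i \<and> i < length Fs \<longrightarrow>
           (\<forall>G\<in>facets (Pow (Fs ! i) \<inter> (\<Union>j<i. Pow (Fs ! j))). card G + 1 = d))))"

definition free_pair :: "'a set set \<Rightarrow> 'a set \<Rightarrow> 'a set \<Rightarrow> bool" where
  "free_pair \<Delta> \<sigma> \<tau> \<longleftrightarrow> \<tau> \<in> facets \<Delta> \<and> \<sigma> \<subset> \<tau> \<and>
     (\<forall>\<tau>'\<in>facets \<Delta>. \<sigma> \<subseteq> \<tau>' \<longrightarrow> \<tau>' = \<tau>)"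

definition collapse :: "'a set set \<Rightarrow> 'a set \<Rightarrow> 'a set set" where
  "collapse \<Delta> \<sigma> = {\<nu> \<in> \<Delta>. \<not> \<sigma> \<subseteq> \<nu>}"

inductive collapsible :: "'a set set \<Rightarrow> bool" where
  void: "collapsible {}"
| step: "free_pair \<Delta> \<sigma> \<tau> \<Longrightarrow> collapsible (collapse \<Delta> \<sigma>) \<Longrightarrow> collapsible \<Delta>"

end

theory Submission
  imports Defs
begin


definition Kc :: "'a set list \<Rightarrow> nat \<Rightarrow> 'a set set" where
  "Kc Fs j = (\<Union>l<j. Pow (Fs!l))"

definition ridges :: "'a set \<Rightarrow> 'a set set" where
  "ridges F = (\<lambda>u. F - {u}) ` F"

definition bd :: "nat \<Rightarrow> 'a set set \<Rightarrow> 'a set set" where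
  "bd d c = {r. finite r \<and> card r + 1 = d \<and> odd (card {G\<in>c. r \<subseteq> G})}"

definition cyc :: "nat \<Rightarrow> 'a set set \<Rightarrow> bool" where
  "cyc d z \<longleftrightarrow> (\<forall>t. finite t \<and> card t + 2 = d \<longrightarrow> even (card {r\<in>z. t \<subseteq> r}))"

lemma Kc_0[simp]: "Kc Fs 0 = {}" by (simp add: Kc_def)

lemma Kc_Suc: "Kc Fs (Suc j) = Kc Fs j \<union> Pow (Fs!j)"
  by (auto simp: Kc_def lessThan_Suc)

lemma Kc_down: "x \<in> Kc Fs j \<Longrightarrow> y \<subseteq> x \<Longrightarrow> y \<in> Kc Fs j"
  by (auto simp: Kc_def)

lemma Kc_mem: "x \<in> Kc Fs j \<longleftrightarrow> (\<exists>l<j. x \<subseteq> Fs!l)"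
  by (auto simp: Kc_def)

lemma Kc_finite: "\<forall>F\<in>set Fs. finite F \<Longrightarrow> j \<le> length Fs \<Longrightarrow> finite (Kc Fs j)"
  unfolding Kc_def by (auto simp: nth_mem)

lemma Kc_mono: "i \<le> j \<Longrightarrow> Kc Fs i \<subseteq> Kc Fs j"
  using order_less_le_trans by (fastforce simp: Kc_mem)

lemma symdiff_parity:
  assumes "finite A" "finite B"
  shows "even (card ((A - B) \<union> (B - A))) = even (card A + card B)"
proof -
  have a: "card A = card (A - B) + card (A \<inter> B)"
    using assms by (metis Diff_Diff_Int card_Diff_subset_Int card_mono diff_add_inverse2
        finite_Int inf_le1 le_add_diff_inverse2 Int_commute)
  have b: "card B = card (B - A) + card (A \<inter> B)"
    using assms by (metis Int_commute card_Diff_subset_Int finite_Int inf_le1 card_mono le_add_diff_inverse2 Diff_Diff_Int)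
  have c: "card ((A - B) \<union> (B - A)) = card (A - B) + card (B - A)"
    using assms by (intro card_Un_disjoint) auto
  show ?thesis using a b c by presburger
qed

lemma cyc_symdiff:
  assumes "finite A" "finite B" "cyc d A" "cyc d B"
  shows "cyc d ((A - B) \<union> (B - A))"
  unfolding cyc_def
proof (intro allI impI)
  fix t :: "'a set" assume t: "finite t \<and> card t + 2 = d"
  let ?A = "{r\<in>A. t \<subseteq> r}" and ?B = "{r\<in>B. t \<subseteq> r}"
  have eq: "{r\<in>(A - B) \<union> (B - A). t \<subseteq> r} = (?A - ?B) \<union> (?B - ?A)" by auto
  have "even (card ?A)" "even (card ?B)" using assms(3,4) t unfolding cyc_def by auto
  then show "even (card {r\<in>(A - B) \<union> (B - A). t \<subseteq> r})"
    unfolding eq using symdiff_parity[of ?A ?B] assms(1,2) by auto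
qed

lemma ridge_char:
  assumes "finite F"
  shows "r \<in> ridges F \<longleftrightarrow> (r \<subseteq> F \<and> card r + 1 = card F)"
proof
  assume "r \<in> ridges F"
  then obtain u where u: "u \<in> F" "r = F - {u}" by (auto simp: ridges_def)
  then show "r \<subseteq> F \<and> card r + 1 = card F" using assms
    by (metis Diff_subset card_Diff1_le card_Diff_singleton card.remove add.commute plus_1_eq_Suc)
next
  assume h: "r \<subseteq> F \<and> card r + 1 = card F"
  then have "finite r" using assms finite_subset by blast
  then have "card (F - r) = 1" using assms h by (auto simp: card_Diff_subset)
  then obtain u where "F - r = {u}" by (meson card_1_singletonE)
  then have "u \<in> F" "r = F - {u}" using h by auto
  then show "r \<in> ridges F" by (auto simp: ridges_def)
qed

lemma cyc_ridges:
  assumes "finite F" "card F = d"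
  shows "cyc d (ridges F)"
  unfolding cyc_def
proof (intro allI impI)
  fix t :: "'a set" assume t: "finite t \<and> card t + 2 = d"
  show "even (card {r\<in>ridges F. t \<subseteq> r})"
  proof (cases "t \<subseteq> F")
    case True
    have eq: "{r\<in>ridges F. t \<subseteq> r} = (\<lambda>u. F - {u}) ` (F - t)"
      using True by (auto simp: ridges_def)
    have inj: "inj_on (\<lambda>u. F - {u}) (F - t)"
      by (auto simp: inj_on_def)
    have "card (F - t) = 2" using True t assms by (auto simp: card_Diff_subset)
    then show ?thesis unfolding eq using card_image[OF inj] by simp
  next
    case False
    then have "{r\<in>ridges F. t \<subseteq> r} = {}" by (auto simp: ridges_def)
    then show ?thesis by (metis card.empty even_zero)
  qed
qed

lemma bd_insert:
  assumes "finite c" "F \<notin> c" "finite F" "card F = d"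
  shows "bd d (insert F c) = (bd d c - ridges F) \<union> (ridges F - bd d c)"
proof -
  have cnt: "card {G\<in>insert F c. r \<subseteq> G} = card {G\<in>c. r \<subseteq> G} + (if r \<subseteq> F then 1 else 0)" for r
  proof (cases "r \<subseteq> F")
    case True
    then have "{G\<in>insert F c. r \<subseteq> G} = insert F {G\<in>c. r \<subseteq> G}" by auto
    then show ?thesis using True assms by simp
  next
    case False
    then have "{G\<in>insert F c. r \<subseteq> G} = {G\<in>c. r \<subseteq> G}" by auto
    then show ?thesis using False by simp
  qed
  show ?thesis
  proof (rule set_eqI)
    fix r
    show "r \<in> bd d (insert F c) \<longleftrightarrow> r \<in> (bd d c - ridges F) \<union> (ridges F - bd d c)"
      using cnt[of r] ridge_char[OF assms(3), of r] assms(3,4)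
      by (auto simp: bd_def intro: finite_subset)
  qed
qed

definition rest :: "'a set list \<Rightarrow> nat \<Rightarrow> 'a set" where
  "rest Fs j = {v\<in>Fs!j. Fs!j - {v} \<in> Kc Fs j}"

lemma rest_notin:
  assumes card: "\<forall>F\<in>set Fs. finite F \<and> card F = d"
    and shell: "\<forall>i. 0 < i \<and> i < length Fs \<longrightarrow> (\<forall>G\<in>facets (Pow (Fs!i) \<inter> Kc Fs i). card G + 1 = d)"
    and j: "j < length Fs"
  shows "rest Fs j \<notin> Kc Fs j"
proof
  assume R: "rest Fs j \<in> Kc Fs j"
  then have j0: "0 < j" by (cases j) auto
  define F where "F = Fs!j"
  have fF: "finite F" and cF: "card F = d" using card j by (auto simp: F_def)
  define X where "X = Pow F \<inter> Kc Fs j"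
  have finX: "finite X" using fF by (simp add: X_def)
  have RX: "rest Fs j \<in> X" using R by (auto simp: X_def rest_def F_def)
  obtain G where G: "G \<in> X" "rest Fs j \<subseteq> G" "\<forall>b\<in>X. G \<subseteq> b \<longrightarrow> G = b"
    using finite_has_maximal2[OF finX RX] by blast
  have "G \<in> facets X" using G by (auto simp: facets_def)
  then have cG: "card G + 1 = d" using shell j0 j by (auto simp: X_def F_def)
  have "G \<in> ridges F" using G(1) cG cF ridge_char[OF fF] by (auto simp: X_def)
  then obtain u where u: "u \<in> F" "G = F - {u}" by (auto simp: ridges_def)
  have "u \<in> rest Fs j" using u G(1) by (auto simp: rest_def X_def F_def)
  then show False using G(2) u by auto
qed

lemma new_face:
  assumes "\<nu> \<subseteq> Fs!j" "\<nu> \<notin> Kc Fs j"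
  shows "rest Fs j \<subseteq> \<nu>"
proof
  fix v assume v: "v \<in> rest Fs j"
  show "v \<in> \<nu>"
  proof (rule ccontr)
    assume "v \<notin> \<nu>"
    then have "\<nu> \<subseteq> Fs!j - {v}" using assms by auto
    then show False using v assms(2) Kc_down[of "Fs!j - {v}" Fs j \<nu>] by (auto simp: rest_def)
  qed
qed


lemma cycle_bd:
  assumes dist: "distinct Fs"
    and card: "\<forall>F\<in>set Fs. finite F \<and> card F = d"
    and shell: "\<forall>i. 0 < i \<and> i < length Fs \<longrightarrow> (\<forall>G\<in>facets (Pow (Fs!i) \<inter> Kc Fs i). card G + 1 = d)"
  shows "j \<le> length Fs \<Longrightarrow> z \<subseteq> Kc Fs j \<Longrightarrow> \<forall>r\<in>z. card r + 1 = d \<Longrightarrow> cyc d z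
    \<Longrightarrow> \<exists>c \<subseteq> set (take j Fs). bd d c = z"
proof (induction j arbitrary: z)
  case 0
  then have "z = {}" by simp
  then show ?case by (intro exI[of _ "{}"]) (auto simp: bd_def)
next
  case (Suc j)
  have jl: "j < length Fs" using Suc.prems by simp
  define F where "F = Fs!j"
  define R where "R = rest Fs j"
  have fF: "finite F" and cF: "card F = d" using card jl by (auto simp: F_def)
  have RnK: "R \<notin> Kc Fs j" unfolding R_def using rest_notin[OF card shell jl] .
  have RF: "R \<subseteq> F" by (auto simp: R_def rest_def F_def)
  have finK: "finite (Kc Fs j)" using card jl by (intro Kc_finite) auto
  have finKS: "finite (Kc Fs (Suc j))" using card Suc.prems(1) by (intro Kc_finite) auto
  have finz: "finite z" using Suc.prems(2) finKS finite_subset by blast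
  have zK: "r \<in> Kc Fs j \<or> r \<in> ridges F" if "r \<in> z" for r
  proof -
    have "r \<in> Kc Fs j \<or> r \<subseteq> F" using that Suc.prems(2) by (auto simp: Kc_Suc F_def)
    then show ?thesis using Suc.prems(3) that ridge_char[OF fF] cF by auto
  qed
  define W where "W = {v \<in> F - R. F - {v} \<in> z}"
  have WW: "w \<in> W" if v: "v \<in> W" and w: "w \<in> F - R" for v w
  proof (cases "w = v")
    case True then show ?thesis using v by simp
  next
    case False
    define t where "t = F - {v, w}"
    have vF: "v \<in> F" "v \<notin> R" using v by (auto simp: W_def)
    have ft: "finite t" using fF by (simp add: t_def)
    have "card {v, w} \<le> card F" using vF w fF by (intro card_mono) auto
    then have c2: "2 \<le> card F" using False by simp
    have ct: "card t + 2 = d" using vF w False cF fF c2 by (auto simp: t_def card_Diff_subset)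
    have ev: "even (card {r\<in>z. t \<subseteq> r})" using Suc.prems(4) ft ct by (auto simp: cyc_def)
    have sub: "{r\<in>z. t \<subseteq> r} \<subseteq> {F - {v}, F - {w}}"
    proof
      fix r assume r: "r \<in> {r\<in>z. t \<subseteq> r}"
      have "r \<notin> Kc Fs j"
      proof
        assume "r \<in> Kc Fs j"
        then have "t \<in> Kc Fs j" using r Kc_down by blast
        moreover have "R \<subseteq> t" using RF vF w by (auto simp: t_def)
        ultimately show False using RnK Kc_down by blast
      qed
      then have "r \<in> ridges F" using zK r by blast
      then obtain u where u: "u \<in> F" "r = F - {u}" by (auto simp: ridges_def)
      then have "u \<in> {v, w}" using r by (auto simp: t_def)
      then show "r \<in> {F - {v}, F - {w}}" using u by auto
    qed
    have vz: "F - {v} \<in> z" using v by (auto simp: W_def)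
    show ?thesis
    proof (rule ccontr)
      assume "w \<notin> W"
      then have "F - {w} \<notin> z" using w by (auto simp: W_def)
      then have "{r\<in>z. t \<subseteq> r} = {F - {v}}" using sub vz by (auto simp: t_def)
      then show False using ev by simp
    qed
  qed
  show ?case
  proof (cases "W = {}")
    case True
    have "z \<subseteq> Kc Fs j"
    proof
      fix r assume r: "r \<in> z"
      show "r \<in> Kc Fs j"
      proof (rule ccontr)
        assume nr: "r \<notin> Kc Fs j"
        then have "r \<in> ridges F" using zK r by blast
        then obtain u where u: "u \<in> F" "r = F - {u}" by (auto simp: ridges_def)
        show False
        proof (cases "u \<in> R")
          case True
          then show False using nr u by (auto simp: R_def rest_def F_def)
        next
          case False
          then have "u \<in> W" using u r by (auto simp: W_def)
          then show False using \<open>W = {}\<close> by simp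
        qed
      qed
    qed
    then obtain c where c: "c \<subseteq> set (take j Fs)" "bd d c = z"
      using Suc.IH[of z] Suc.prems jl by (metis Suc_leD)
    have "set (take j Fs) \<subseteq> set (take (Suc j) Fs)" by (simp add: set_take_subset_set_take)
    then show ?thesis using c by blast
  next
    case False
    then obtain v where v: "v \<in> W" by blast
    have Wall: "W = F - R" using WW[OF v] by (auto simp: W_def)
    define z' where "z' = (z - ridges F) \<union> (ridges F - z)"
    have finr: "finite (ridges F)" using fF by (simp add: ridges_def)
    have z'K: "z' \<subseteq> Kc Fs j"
    proof
      fix r assume r: "r \<in> z'"
      show "r \<in> Kc Fs j"
      proof (cases "r \<in> z")
        case True
        then show ?thesis using r zK by (auto simp: z'_def)
      next
        case False
        then have rr: "r \<in> ridges F" using r by (auto simp: z'_def)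
        then obtain u where u: "u \<in> F" "r = F - {u}" by (auto simp: ridges_def)
        have "u \<notin> W" using False u by (auto simp: W_def)
        then have "u \<in> R" using Wall u by auto
        then show ?thesis using u by (auto simp: R_def rest_def F_def)
      qed
    qed
    have z'c: "\<forall>r\<in>z'. card r + 1 = d"
      using Suc.prems(3) ridge_char[OF fF] cF by (auto simp: z'_def)
    have z'cyc: "cyc d z'" unfolding z'_def
      using cyc_symdiff[OF finz finr Suc.prems(4) cyc_ridges[OF fF cF]] .
    obtain c where c: "c \<subseteq> set (take j Fs)" "bd d c = z'"
      using Suc.IH[OF _ z'K z'c z'cyc] jl by auto
    have Fnc: "F \<notin> c"
    proof
      assume "F \<in> c"
      then have "Fs!j \<in> set (take j Fs)" using c by (auto simp: F_def)
      then obtain l where "l < j" "take j Fs ! l = Fs ! j" by (auto simp: in_set_conv_nth)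
      then have "Fs ! l = Fs ! j" "l < j" by auto
      then show False using dist jl nth_eq_iff_index_eq by fastforce
    qed
    have finc: "finite c" using c(1) finite_subset by blast
    have "bd d (insert F c) = (z' - ridges F) \<union> (ridges F - z')"
      using bd_insert[OF finc Fnc fF cF] c(2) by simp
    also have "\<dots> = z" by (auto simp: z'_def)
    finally have "bd d (insert F c) = z" .
    moreover have "insert F c \<subseteq> set (take (Suc j) Fs)"
      using c(1) jl by (auto simp: F_def take_Suc_conv_app_nth)
    ultimately show ?thesis by blast
  qed
qed


lemma notin_take:
  assumes "distinct Fs" "j < length Fs"
  shows "Fs!j \<notin> set (take j Fs)"
proof
  assume "Fs!j \<in> set (take j Fs)"
  then obtain l where "l < j" "take j Fs ! l = Fs ! j" by (auto simp: in_set_conv_nth)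
  then have "Fs ! l = Fs ! j" "l < j" by auto
  then show False using assms nth_eq_iff_index_eq by fastforce
qed

lemma closed_chain:
  assumes dist: "distinct Fs"
    and card: "\<forall>F\<in>set Fs. finite F \<and> card F = d"
    and shell: "\<forall>i. 0 < i \<and> i < length Fs \<longrightarrow> (\<forall>G\<in>facets (Pow (Fs!i) \<inter> Kc Fs i). card G + 1 = d)"
    and m: "m < length Fs" and full: "rest Fs m = Fs!m"
  shows "\<exists>c \<subseteq> set Fs. Fs!m \<in> c \<and> bd d c = {}"
proof -
  define F where "F = Fs!m"
  have fF: "finite F" and cF: "card F = d" using card m by (auto simp: F_def)
  have zK: "ridges F \<subseteq> Kc Fs m"
  proof
    fix r assume "r \<in> ridges F"
    then obtain u where u: "u \<in> F" "r = F - {u}" by (auto simp: ridges_def)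
    then have "u \<in> rest Fs m" using full by (simp add: F_def)
    then show "r \<in> Kc Fs m" using u by (auto simp: rest_def F_def)
  qed
  have zc: "\<forall>r\<in>ridges F. card r + 1 = d" using ridge_char[OF fF] cF by auto
  obtain c where c: "c \<subseteq> set (take m Fs)" "bd d c = ridges F"
    using cycle_bd[OF dist card shell _ zK zc cyc_ridges[OF fF cF]] m by auto
  have Fnc: "F \<notin> c" using notin_take[OF dist m] c(1) by (auto simp: F_def)
  have finc: "finite c" using c(1) finite_subset by blast
  have "bd d (insert F c) = {}"
    using bd_insert[OF finc Fnc fF cF] c(2) by simp
  moreover have "insert F c \<subseteq> set Fs"
    using c(1) m set_take_subset[of m Fs] nth_mem[OF m] unfolding F_def by blast
  ultimately show ?thesis unfolding F_def by blast
qed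

lemma collapsible_Kc:
  assumes dist: "distinct Fs"
    and card: "\<forall>F\<in>set Fs. finite F \<and> card F = d" and d: "1 \<le> d"
    and shell: "\<forall>i. 0 < i \<and> i < length Fs \<longrightarrow> (\<forall>G\<in>facets (Pow (Fs!i) \<inter> Kc Fs i). card G + 1 = d)"
    and norest: "\<forall>m. 0 < m \<and> m < length Fs \<longrightarrow> rest Fs m \<noteq> Fs!m"
  shows "j \<le> length Fs \<Longrightarrow> collapsible (Kc Fs j)"
proof (induction j)
  case 0
  then show ?case by (simp add: collapsible.void)
next
  case (Suc j)
  have jl: "j < length Fs" using Suc.prems by simp
  define F where "F = Fs!j"
  define R where "R = rest Fs j"
  have fF: "finite F" and cF: "card F = d" using card jl by (auto simp: F_def)
  have RnK: "R \<notin> Kc Fs j" unfolding R_def using rest_notin[OF card shell jl] .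
  have RF: "R \<subseteq> F" by (auto simp: R_def rest_def F_def)
  have RneF: "R \<noteq> F"
  proof (cases j)
    case 0
    then have "R = {}" by (simp add: R_def rest_def)
    moreover have "F \<noteq> {}" using cF d by auto
    ultimately show ?thesis by simp
  next
    case (Suc j')
    then show ?thesis using norest jl by (auto simp: R_def F_def)
  qed
  have maxF: "G = F" if "G \<in> Kc Fs (Suc j)" "F \<subseteq> G" for G
  proof -
    have "\<exists>l<Suc j. G \<subseteq> Fs!l" using that(1) Kc_mem by metis
    then obtain l where l: "l < Suc j" "G \<subseteq> Fs!l" by blast
    have lm: "Fs!l \<in> set Fs" using l jl by (intro nth_mem) simp
    have "finite (Fs!l)" "card (Fs!l) = d" using card lm by blast+
    moreover have "F \<subseteq> Fs!l" using that(2) l by blast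
    ultimately have "F = Fs!l" using card_subset_eq[of "Fs!l" F] cF by simp
    then show ?thesis using that(2) l by blast
  qed
  have FK: "F \<in> Kc Fs (Suc j)" by (auto simp: Kc_Suc F_def)
  have fp: "free_pair (Kc Fs (Suc j)) R F"
    unfolding free_pair_def
  proof (intro conjI ballI impI)
    show "F \<in> facets (Kc Fs (Suc j))" using FK maxF by (auto simp: facets_def)
    show "R \<subset> F" using RF RneF by auto
    fix t assume t: "t \<in> facets (Kc Fs (Suc j))" "R \<subseteq> t"
    have tK: "t \<in> Kc Fs (Suc j)" using t by (simp add: facets_def)
    have "t \<notin> Kc Fs j" using t(2) RnK Kc_down by blast
    then have "t \<subseteq> F" using tK by (auto simp: Kc_Suc F_def)
    then show "t = F" using t(1) FK by (auto simp: facets_def)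
  qed
  have col: "collapse (Kc Fs (Suc j)) R = Kc Fs j"
  proof (rule set_eqI)
    fix \<nu>
    show "\<nu> \<in> collapse (Kc Fs (Suc j)) R \<longleftrightarrow> \<nu> \<in> Kc Fs j"
    proof
      assume a: "\<nu> \<in> collapse (Kc Fs (Suc j)) R"
      then have "\<nu> \<in> Kc Fs (Suc j)" "\<not> R \<subseteq> \<nu>" by (auto simp: collapse_def)
      then show "\<nu> \<in> Kc Fs j" using new_face[of \<nu> Fs j] by (auto simp: Kc_Suc R_def)
    next
      assume a: "\<nu> \<in> Kc Fs j"
      then have "\<not> R \<subseteq> \<nu>" using RnK Kc_down by blast
      then show "\<nu> \<in> collapse (Kc Fs (Suc j)) R" using a Kc_mono[of j "Suc j" Fs]
        by (auto simp: collapse_def)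
    qed
  qed
  show ?case using collapsible.step[OF fp] col Suc.IH jl by simp
qed



lemma pf_Inl: "Inl i \<in> polar_facet n \<sigma> \<longleftrightarrow> i \<in> \<sigma>"
  by (auto simp: polar_facet_def)

lemma pf_Inr: "Inr i \<in> polar_facet n \<sigma> \<longleftrightarrow> i \<in> {1..n} \<and> i \<notin> \<sigma>"
  by (auto simp: polar_facet_def)

lemma pf_inj: "polar_facet n \<sigma> = polar_facet n \<tau> \<Longrightarrow> \<sigma> = \<tau>"
  by (metis pf_Inl subsetI subset_antisym)

lemma pf_card:
  assumes "\<sigma> \<subseteq> {1..n}"
  shows "finite (polar_facet n \<sigma>) \<and> card (polar_facet n \<sigma>) = n"
proof -
  have fs: "finite \<sigma>" using assms finite_subset by blast
  have "card (polar_facet n \<sigma>) = card (Inl ` \<sigma> :: (nat + nat) set) + card (Inr ` ({1..n} - \<sigma>) :: (nat + nat) set)"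
    unfolding polar_facet_def by (rule card_Un_disjoint) (use fs in auto)
  also have "\<dots> = card \<sigma> + card ({1..n} - \<sigma>)"
    by (simp add: card_image)
  also have "\<dots> = n"
  proof -
    have "card \<sigma> \<le> card {1..n}" using assms by (intro card_mono) auto
    then show ?thesis using assms fs by (simp add: card_Diff_subset)
  qed
  finally show ?thesis using fs by (simp add: polar_facet_def)
qed

lemma pf_sub:
  assumes "\<sigma> \<subseteq> {1..n}" "\<tau> \<subseteq> {1..n}" "polar_facet n \<sigma> \<subseteq> polar_facet n \<tau>"
  shows "\<sigma> = \<tau>"
  using assms pf_card[OF assms(1)] pf_card[OF assms(2)] card_subset_eq pf_inj by metis

lemma facets_polar:
  assumes "C \<subseteq> Pow {1..n}"
  shows "facets (polar_complex n C) = polar_facet n ` C"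
proof (rule set_eqI)
  fix F
  show "F \<in> facets (polar_complex n C) \<longleftrightarrow> F \<in> polar_facet n ` C"
  proof
    assume F: "F \<in> facets (polar_complex n C)"
    then obtain \<sigma> where s: "\<sigma> \<in> C" "F \<subseteq> polar_facet n \<sigma>"
      by (auto simp: facets_def polar_complex_def)
    have "polar_facet n \<sigma> \<in> polar_complex n C" using s by (auto simp: polar_complex_def)
    then have "polar_facet n \<sigma> = F" using F s by (auto simp: facets_def)
    then show "F \<in> polar_facet n ` C" using s by auto
  next
    assume "F \<in> polar_facet n ` C"
    then obtain \<sigma> where s: "\<sigma> \<in> C" "F = polar_facet n \<sigma>" by auto
    show "F \<in> facets (polar_complex n C)"
      unfolding facets_def
    proof (intro CollectI conjI ballI impI)
      show "F \<in> polar_complex n C" using s by (auto simp: polar_complex_def)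
      fix G assume G: "G \<in> polar_complex n C" "F \<subseteq> G"
      then obtain \<tau> where t: "\<tau> \<in> C" "G \<subseteq> polar_facet n \<tau>" by (auto simp: polar_complex_def)
      have "\<sigma> = \<tau>" using pf_sub[of \<sigma> n \<tau>] s t G assms by blast
      then show "G = F" using s t G by auto
    qed
  qed
qed

lemma polar_Kc:
  assumes "set Fs = polar_facet n ` C"
  shows "polar_complex n C = Kc Fs (length Fs)"
proof (rule set_eqI)
  fix x
  have "x \<in> Kc Fs (length Fs) \<longleftrightarrow> (\<exists>F\<in>set Fs. x \<subseteq> F)"
    unfolding Kc_mem by (metis in_set_conv_nth)
  then show "x \<in> polar_complex n C \<longleftrightarrow> x \<in> Kc Fs (length Fs)"
    using assms by (auto simp: polar_complex_def)
qed

definition vk :: "nat set \<Rightarrow> nat \<Rightarrow> nat + nat" where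
  "vk \<sigma> k = (if k \<in> \<sigma> then Inl k else Inr k)"

lemma neighbor:
  assumes C: "C \<subseteq> Pow {1..n}" and c: "c \<subseteq> polar_facet n ` C" and bd: "bd n c = {}"
    and s: "\<sigma> \<subseteq> {1..n}" "polar_facet n \<sigma> \<in> c" and k: "k \<in> {1..n}"
  shows "polar_facet n ((\<sigma> - {k}) \<union> ({k} - \<sigma>)) \<in> c"
proof -
  define F where "F = polar_facet n \<sigma>"
  define r where "r = F - {vk \<sigma> k}"
  have fF: "finite F" "card F = n" using pf_card[OF s(1)] by (auto simp: F_def)
  have vin: "vk \<sigma> k \<in> F" using k by (auto simp: vk_def F_def polar_facet_def)
  have fr: "finite r" using fF by (simp add: r_def)
  have cr: "card r + 1 = n" using fF vin by (simp add: r_def)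
    (metis One_nat_def Suc_pred card_gt_0_iff empty_iff)
  have fc: "finite c" using c finite_subset[OF c] C finite_Pow_iff
    by (metis finite_atLeastAtMost finite_imageI finite_subset)
  have "r \<notin> bd n c" using bd by simp
  then have ev: "even (card {G\<in>c. r \<subseteq> G})" using fr cr by (auto simp: bd_def)
  have Fin: "F \<in> {G\<in>c. r \<subseteq> G}" using s by (auto simp: F_def r_def)
  obtain G where G: "G \<in> c" "r \<subseteq> G" "G \<noteq> F"
  proof (rule ccontr)
    assume "\<not> thesis"
    then have "{G\<in>c. r \<subseteq> G} = {F}" using Fin that by blast
    then show False using ev by simp
  qed
  obtain \<tau> where t: "\<tau> \<in> C" "G = polar_facet n \<tau>" using G c by auto
  have tn: "\<tau> \<subseteq> {1..n}" using t C by auto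
  have ne: "\<tau> \<noteq> \<sigma>" using G t by (auto simp: F_def)
  have agree: "i \<in> \<tau> \<longleftrightarrow> i \<in> \<sigma>" if "i \<noteq> k" for i
  proof
    assume i: "i \<in> \<tau>"
    show "i \<in> \<sigma>"
    proof (rule ccontr)
      assume ni: "i \<notin> \<sigma>"
      have "i \<in> {1..n}" using i tn by auto
      then have "Inr i \<in> r" using ni that by (auto simp: r_def F_def vk_def pf_Inr)
      then have "Inr i \<in> G" using G by auto
      then show False using i t by (simp add: pf_Inr)
    qed
  next
    assume i: "i \<in> \<sigma>"
    then have "Inl i \<in> r" using that by (auto simp: r_def F_def vk_def pf_Inl)
    then have "Inl i \<in> G" using G by auto
    then show "i \<in> \<tau>" using t by (simp add: pf_Inl)
  qed
  have "\<tau> = (\<sigma> - {k}) \<union> ({k} - \<sigma>)"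
  proof (rule set_eqI)
    fix i show "i \<in> \<tau> \<longleftrightarrow> i \<in> (\<sigma> - {k}) \<union> ({k} - \<sigma>)"
    proof (cases "i = k")
      case False then show ?thesis using agree[OF False] by auto
    next
      case True
      have "(k \<in> \<tau>) \<noteq> (k \<in> \<sigma>)"
      proof
        assume kk: "(k \<in> \<tau>) = (k \<in> \<sigma>)"
        have "\<tau> = \<sigma>"
        proof (rule set_eqI)
          fix i show "i \<in> \<tau> \<longleftrightarrow> i \<in> \<sigma>" using agree[of i] kk by (cases "i = k") auto
        qed
        then show False using ne by simp
      qed
      then show ?thesis using True by auto
    qed
  qed
  then show ?thesis using G t by simp
qed

lemma reach:
  assumes C: "C \<subseteq> Pow {1..n}" and c: "c \<subseteq> polar_facet n ` C" and bd: "bd n c = {}"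
  shows "\<sigma> \<subseteq> {1..n} \<Longrightarrow> polar_facet n \<sigma> \<in> c \<Longrightarrow> \<tau> \<subseteq> {1..n}
     \<Longrightarrow> card ((\<sigma> - \<tau>) \<union> (\<tau> - \<sigma>)) = m \<Longrightarrow> polar_facet n \<tau> \<in> c"
proof (induction m arbitrary: \<sigma>)
  case 0
  have "finite ((\<sigma> - \<tau>) \<union> (\<tau> - \<sigma>))" using 0 finite_subset by (meson finite_Diff finite_Un finite_atLeastAtMost)
  then have "(\<sigma> - \<tau>) \<union> (\<tau> - \<sigma>) = {}" using 0 by simp
  then have "\<sigma> = \<tau>" by blast
  then show ?case using 0 by simp
next
  case (Suc m)
  define D where "D = (\<sigma> - \<tau>) \<union> (\<tau> - \<sigma>)"
  have fD: "finite D" unfolding D_def using Suc.prems finite_subset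
    by (meson finite_Diff finite_Un finite_atLeastAtMost)
  have "D \<noteq> {}" using Suc.prems by (auto simp: D_def)
  then obtain k where kD: "k \<in> D" by blast
  have k: "k \<in> {1..n}" using kD Suc.prems by (auto simp: D_def)
  define \<sigma>' where "\<sigma>' = (\<sigma> - {k}) \<union> ({k} - \<sigma>)"
  have s': "polar_facet n \<sigma>' \<in> c" unfolding \<sigma>'_def using neighbor[OF C c bd Suc.prems(1,2) k] .
  have s'n: "\<sigma>' \<subseteq> {1..n}" using Suc.prems k by (auto simp: \<sigma>'_def)
  have "(\<sigma>' - \<tau>) \<union> (\<tau> - \<sigma>') = D - {k}" using kD by (auto simp: D_def \<sigma>'_def)
  then have "card ((\<sigma>' - \<tau>) \<union> (\<tau> - \<sigma>')) = m" using Suc.prems(4) kD fD by (simp add: D_def)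
  then show ?case using Suc.IH[OF s'n s' Suc.prems(3)] by simp
qed

theorem lemma7p5:
  fixes n :: nat and C :: "nat set set"
  assumes "C \<subseteq> Pow {1..n}"
    and "shellable (polar_complex n C)"
  shows "C = Pow {1..n} \<or> collapsible (polar_complex n C)"
proof (cases "C = Pow {1..n}")
  case True then show ?thesis by simp
next
  case False
  note C = assms(1)
  obtain d Fs where cardF: "\<forall>F\<in>facets (polar_complex n C). finite F \<and> card F = d"
    and dist: "distinct Fs" and setF: "set Fs = facets (polar_complex n C)"
    and sh: "\<forall>i. 0 < i \<and> i < length Fs \<longrightarrow>
           (\<forall>G\<in>facets (Pow (Fs ! i) \<inter> (\<Union>j<i. Pow (Fs ! j))). card G + 1 = d)"
    using assms(2) unfolding shellable_def by blast
  have shell: "\<forall>i. 0 < i \<and> i < length Fs \<longrightarrow> (\<forall>G\<in>facets (Pow (Fs!i) \<inter> Kc Fs i). card G + 1 = d)"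
    using sh unfolding Kc_def by blast
  have fac: "facets (polar_complex n C) = polar_facet n ` C" using facets_polar[OF C] .
  have setF': "set Fs = polar_facet n ` C" using setF fac by simp
  have card: "\<forall>F\<in>set Fs. finite F \<and> card F = d" using cardF setF by simp
  have PK: "polar_complex n C = Kc Fs (length Fs)" using polar_Kc[OF setF'] .
  show ?thesis
  proof (cases "C = {}")
    case True
    then have "polar_complex n C = {}" by (simp add: polar_complex_def)
    then show ?thesis by (simp add: collapsible.void)
  next
    case Cne: False
    then obtain \<sigma>0 where s0: "\<sigma>0 \<in> C" by blast
    have s0n: "\<sigma>0 \<subseteq> {1..n}" using s0 C by auto
    have "d = n" using card setF' s0 pf_card[OF s0n] by auto
    have n1: "1 \<le> n"
    proof (rule ccontr)
      assume "\<not> 1 \<le> n"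
      then have "n = 0" by simp
      then have "C = Pow {1..n}" using C Cne by auto
      then show False using False by simp
    qed
    have norest: "\<forall>m. 0 < m \<and> m < length Fs \<longrightarrow> rest Fs m \<noteq> Fs!m"
    proof (intro allI impI)
      fix m assume m: "0 < m \<and> m < length Fs"
      show "rest Fs m \<noteq> Fs!m"
      proof
        assume full: "rest Fs m = Fs!m"
        obtain c where c: "c \<subseteq> set Fs" "Fs!m \<in> c" "bd d c = {}"
          using closed_chain[OF dist card shell _ full] m by blast
        have "Fs!m \<in> polar_facet n ` C" using m setF' nth_mem by blast
        then obtain \<sigma> where s: "\<sigma> \<in> C" "Fs!m = polar_facet n \<sigma>" by auto
        have sn: "\<sigma> \<subseteq> {1..n}" using s C by auto
        have "Pow {1..n} \<subseteq> C"
        proof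
          fix \<tau> assume "\<tau> \<in> Pow {1..n}"
          then have tn: "\<tau> \<subseteq> {1..n}" by simp
          have "polar_facet n \<tau> \<in> c"
            using reach[OF C _ _ sn _ tn refl] c setF' s \<open>d = n\<close> by auto
          then obtain \<tau>' where "\<tau>' \<in> C" "polar_facet n \<tau> = polar_facet n \<tau>'"
            using c setF' by blast
          then show "\<tau> \<in> C" using pf_inj by blast
        qed
        then show False using False C by blast
      qed
    qed
    have "collapsible (Kc Fs (length Fs))"
      using collapsible_Kc[OF dist card _ shell norest] n1 \<open>d = n\<close> by simp
    then show ?thesis using PK by simp
  qed
qed

end
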